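(* Let $F:\mathbb{R}^n\to\mathbb{R}^n$ be semilinear, monotone and homogeneous. Then there exists a game graph $\vec{\mathcal{G}}$ with Min vertex set $[n]$ satisfying assumptions (a)–(c) such that $F$ is the operator encoded by $\vec{\mathcal{G}}$.
   Context: Game graph: a directed graph $\vec{\mathcal{G}}=(V,E)$ with $V=V_{\mathrm{Min}}\uplus V_{\mathrm{Rand}}\uplus V_{\mathrm{Max}}$, $V_{\mathrm{Min}}=[n]$ and $V_{\mathrm{Max}}=[m]$ nonempty, every vertex having at least one outgoing edge; $\mathrm{Out}(v)$ is the set of outgoing edges of $v$. Each edge $e$ with Min or Max tail carries a real $r_e$; each edge $e$ with Random tail carries a rational $q_e>0$, summing to $1$ over the outgoing edges of each Random vertex. Assumptions: (a) every path between two Min vertices contains a Max vertex; (b) every path between two Max vertices contains a Min vertex; (c) from every Random vertex there is a path to a Min or Max vertex. In the Markov chain on $V$ where Min and Max vertices are absorbing and a Random vertex $v$ moves to $w$ with probability $q_{(v,w)}$, $p^e_v$ is the probability that the chain started at the head of edge $e$ is absorbed at $v\in V_{\mathrm{Min}}\cup V_{\mathrm{Max}}$. The operator encoded by $\vec{\mathcal{G}}$ is $F_v(x)=\min_{e\in\mathrm{Out}(v)}\big(r_e+\sum_{w\in[m]}p^e_w\max_{e'\in\mathrm{Out}(w)}(r_{e'}+\sum_{u\in[n]}p^{e'}_u x_u)\big)$, $v\in[n]$. Semilinear: graph of $F$ is a finite union of sets $\{z: \langle A_i,z\rangle>b_i,\ \langle A_j,z\rangle=b_j\}$ with rational $A$,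 real $b$. Monotone: $x\le y\Rightarrow F(x)\le F(y)$; homogeneous: $F(\lambda+x)=\lambda+F(x)$ for $\lambda\in\mathbb{R}$. *)

theory Defs
  imports "HOL-Analysis.Analysis"
begin

text \<open>A linear constraint on z = (x,y) in R^n x R^n: coefficient vectors a (for x) and
  c (for y), right-hand side b.\<close>

type_synonym 'n lin_constr = "(real^('n::finite)) \<times> (real^'n) \<times> real"

definition rational_constr :: "('n::finite) lin_constr \<Rightarrow> bool" where
  "rational_constr C \<longleftrightarrow> (case C of (a, c, b) \<Rightarrow> (\<forall>i. a $ i \<in> \<rat> \<and> c $ i \<in> \<rat>))"

definition basic_semilinear_set :: 
  "('n::finite) lin_constr set \<Rightarrow> 'n lin_constr set \<Rightarrow> ((real^'n) \<times> (real^'n)) set" where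
  "basic_semilinear_set S Q =
     {(x, y). (\<forall>(a, c, b)\<in>S. a \<bullet> x + c \<bullet> y > b) \<and> (\<forall>(a, c, b)\<in>Q. a \<bullet> x + c \<bullet> y = b)}"

definition semilinear_map :: "(real^('n::finite) \<Rightarrow> real^'n) \<Rightarrow> bool" where
  "semilinear_map F \<longleftrightarrow>
     (\<exists>P :: ('n lin_constr set \<times> 'n lin_constr set) set.
        finite P \<and>
        (\<forall>(S, Q)\<in>P. finite S \<and> finite Q \<and> (\<forall>C\<in>S \<union> Q. rational_constr C)) \<and>
        {(x, F x) | x. True} = (\<Union>(S, Q)\<in>P. basic_semilinear_set S Q))"

definition monotone_map :: "(real^('n::finite) \<Rightarrow> real^'n) \<Rightarrow> bool" where
  "monotone_map F \<longleftrightarrow> (\<forall>x y. (\<forall>i. x $ i \<le> y $ i) \<longrightarrow> (\<forall>i. F x $ i \<le> F y $ i))"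

definition homogeneous_map :: "(real^('n::finite) \<Rightarrow> real^'n) \<Rightarrow> bool" where
  "homogeneous_map F \<longleftrightarrow> (\<forall>(l::real) x. F ((\<chi> i. l) + x) = (\<chi> i. l) + F x)"

text \<open>Vertices: Min vertices are indexed by the finite type 'n (playing the role of [n]),
  Max vertices are MaxV j with j < m (i.e. [m]), Random vertices are RandV k, k in a finite set.\<close>

datatype 'n vertex = MinV 'n | MaxV nat | RandV nat

fun is_min :: "'n vertex \<Rightarrow> bool" where
  "is_min (MinV _) = True" | "is_min _ = False"
fun is_max :: "'n vertex \<Rightarrow> bool" where
  "is_max (MaxV _) = True" | "is_max _ = False"
fun is_rand :: "'n vertex \<Rightarrow> bool" where
  "is_rand (RandV _) = True" | "is_rand _ = False"

type_synonym 'n edge = "'n vertex \<times> 'n vertex"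

definition vertices :: "nat \<Rightarrow> nat set \<Rightarrow> 'n vertex set" where
  "vertices m R = range MinV \<union> MaxV ` {..<m} \<union> RandV ` R"

definition Out :: "'n edge set \<Rightarrow> 'n vertex \<Rightarrow> 'n edge set" where
  "Out E v = {e \<in> E. fst e = v}"

definition is_path :: "'n edge set \<Rightarrow> 'n vertex list \<Rightarrow> bool" where
  "is_path E xs \<longleftrightarrow> length xs \<ge> 2 \<and> (\<forall>i. Suc i < length xs \<longrightarrow> (xs ! i, xs ! Suc i) \<in> E)"

definition game_graph ::
  "nat \<Rightarrow> nat set \<Rightarrow> 'n edge set \<Rightarrow> ('n edge \<Rightarrow> real) \<Rightarrow> ('n edge \<Rightarrow> real) \<Rightarrow> bool" where
  "game_graph m R E r q \<longleftrightarrow>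
     m > 0 \<and> finite R \<and>
     E \<subseteq> vertices m R \<times> vertices m R \<and>
     (\<forall>v\<in>vertices m R. Out E v \<noteq> {}) \<and>
     (\<forall>e\<in>E. is_rand (fst e) \<longrightarrow> q e \<in> \<rat> \<and> q e > 0) \<and>
     (\<forall>v\<in>vertices m R. is_rand v \<longrightarrow> (\<Sum>e\<in>Out E v. q e) = 1) \<and>
     \<comment> \<open>(a)\<close>
     (\<forall>xs. is_path E xs \<and> is_min (hd xs) \<and> is_min (last xs) \<longrightarrow> (\<exists>w\<in>set xs. is_max w)) \<and>
     \<comment> \<open>(b)\<close>
     (\<forall>xs. is_path E xs \<and> is_max (hd xs) \<and> is_max (last xs) \<longrightarrow> (\<exists>w\<in>set xs. is_min w)) \<and>
     \<comment> \<open>(c)\<close>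
     (\<forall>v\<in>vertices m R. is_rand v \<longrightarrow>
        (\<exists>xs. is_path E xs \<and> hd xs = v \<and> (is_min (last xs) \<or> is_max (last xs))))"

text \<open>absorb_within E q k w v: probability that the Markov chain (Min and Max vertices
  absorbing, a Random vertex u moves to w with probability q (u,w)) started at w
  is absorbed at v within k steps.\<close>
fun absorb_within :: "'n edge set \<Rightarrow> ('n edge \<Rightarrow> real) \<Rightarrow> nat \<Rightarrow> 'n vertex \<Rightarrow> 'n vertex \<Rightarrow> real" where
  "absorb_within E q 0 w v = (if \<not> is_rand w \<and> w = v then 1 else 0)"
| "absorb_within E q (Suc k) w v =
     (if is_rand w then (\<Sum>e\<in>Out E w. q e * absorb_within E q k (snd e) v)
      else (if w = v then 1 else 0))"

text \<open>Absorption probability at v starting from w (limit of the nondecreasing sequence).\<close>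
definition absorb :: "'n edge set \<Rightarrow> ('n edge \<Rightarrow> real) \<Rightarrow> 'n vertex \<Rightarrow> 'n vertex \<Rightarrow> real" where
  "absorb E q w v = lim (\<lambda>k. absorb_within E q k w v)"

text \<open>p^e_v = absorb E q (snd e) v.  The operator encoded by the game graph.\<close>
definition encoded_operator ::
  "nat \<Rightarrow> ('n::finite) edge set \<Rightarrow> ('n edge \<Rightarrow> real) \<Rightarrow> ('n edge \<Rightarrow> real) \<Rightarrow> real^'n \<Rightarrow> real^'n" where
  "encoded_operator m E r q x = (\<chi> v.
     Min ((\<lambda>e. r e + (\<Sum>w<m. absorb E q (snd e) (MaxV w) *
              Max ((\<lambda>e'. r e' + (\<Sum>u\<in>UNIV. absorb E q (snd e') (MinV u) * x $ u))
                   ` Out E (MaxV w))))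
          ` Out E (MinV v)))"

end

theory Submission
  imports Defs
begin


definition qsc :: "rat \<Rightarrow> real \<Rightarrow> real" where "qsc r x = of_rat r * x"

lemma qsc_vs: "vector_space qsc"
  by unfold_locales (auto simp: qsc_def algebra_simps of_rat_add of_rat_mult)

lemma rat_proj:
  "\<exists>\<psi>::real\<Rightarrow>real. (\<forall>x y. \<psi>(x+y) = \<psi> x + \<psi> y) \<and> (\<forall>q x. q\<in>\<rat> \<longrightarrow> \<psi>(q*x) = q * \<psi> x)
      \<and> (\<forall>x. \<psi> x \<in> \<rat>) \<and> (\<forall>q\<in>\<rat>. \<psi> q = q)"
proof -
  interpret V: vector_space qsc by (rule qsc_vs)
  interpret P: vector_space_pair qsc qsc by unfold_locales
  have ind: "V.independent {1::real}"
    by (simp add: V.independent_insert)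
  define \<psi> where "\<psi> = P.construct {1} (\<lambda>_. 1)"
  interpret L: Vector_Spaces.linear qsc qsc \<psi> unfolding \<psi>_def by (rule P.linear_construct[OF ind])
  have p1: "\<psi> 1 = 1" unfolding \<psi>_def by (rule P.construct_basis[OF ind]) simp
  have padd: "\<psi>(x+y) = \<psi> x + \<psi> y" for x y by (rule L.add)
  have psc: "\<psi>(of_rat r * x) = of_rat r * \<psi> x" for r x
    using L.scale[of r x] by (simp add: qsc_def)
  have pq: "\<psi> x \<in> \<rat>" for x
  proof -
    have "\<psi> x \<in> V.span ((\<lambda>_. 1) ` {1::real})" unfolding \<psi>_def by (rule P.construct_in_span[OF ind])
    then have "\<psi> x \<in> range (\<lambda>k. qsc k 1)" by (simp add: V.span_singleton)
    then show ?thesis by (auto simp: qsc_def)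
  qed
  have "\<forall>q x. q\<in>\<rat> \<longrightarrow> \<psi>(q*x) = q * \<psi> x"
    by (auto elim!: Rats_cases simp: psc)
  moreover have "\<forall>q\<in>\<rat>. \<psi> q = q"
    using psc[of _ 1] p1 by (auto elim!: Rats_cases)
  ultimately show ?thesis using padd pq by blast
qed


lemma oneD:
  fixes h :: "real \<Rightarrow> real" and L :: "(real \<times> real) set"
  assumes fin: "finite L" and cont: "\<And>t. isCont h t"
    and cov: "\<And>t. 0 \<le> t \<Longrightarrow> t \<le> 1 \<Longrightarrow> \<exists>(a,b)\<in>L. h t = a + b*t"
  shows "\<exists>(a,b)\<in>L. a \<le> h 0 \<and> a + b \<ge> h 1"
proof (rule ccontr)
  assume neg: "\<not> ?thesis"
  define A where "A = {(a,b)\<in>L. a \<le> h 0}"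
  have finA: "finite A" using fin unfolding A_def by (rule finite_subset[rotated]) auto
  have negA: "fst g + snd g < h 1" if "g \<in> A" for g
    using neg that unfolding A_def by (auto simp: not_le)
  define Z where "Z = (\<Union>g\<in>A. {0..1} \<inter> {t. h t = fst g + snd g * t})"
  have clZ: "closed Z" unfolding Z_def
    by (intro closed_UN finA ballI closed_Int closed_atLeastAtMost closed_Collect_eq continuous_intros)
       (auto intro: cont continuous_at_imp_continuous_on)
  have "0 \<in> Z"
  proof -
    obtain a b where "(a,b)\<in>L" "h 0 = a + b*0" using cov[of 0] by auto
    then show ?thesis unfolding Z_def A_def by (auto intro!: bexI[of _ "(a,b)"])
  qed
  have Zsub: "Z \<subseteq> {0..1}" unfolding Z_def by auto
  define t1 where "t1 = Sup Z"
  have bdd: "bdd_above Z" using Zsub by (auto intro: bdd_above_mono)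
  have t1Z: "t1 \<in> Z" unfolding t1_def using \<open>0\<in>Z\<close> bdd clZ by (intro closed_contains_Sup) auto
  have upper: "t \<le> t1" if "t \<in> Z" for t unfolding t1_def using that bdd by (rule cSup_upper)
  have t1r: "0 \<le> t1" "t1 \<le> 1" using t1Z Zsub by auto
  have "t1 \<noteq> 1"
  proof
    assume "t1 = 1"
    with t1Z obtain g where "g \<in> A" "h 1 = fst g + snd g * 1" unfolding Z_def by auto
    with negA[of g] show False by simp
  qed
  with t1r have t1lt: "t1 < 1" by simp
  obtain g0 where g0A: "g0 \<in> A" and g0t1: "h t1 = fst g0 + snd g0 * t1"
    using t1Z unfolding Z_def by auto
  have below: "fst g + snd g * t < h t" if gA: "g \<in> A" and t: "t1 < t" "t \<le> 1" for g t
  proof (rule ccontr)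
    assume "\<not> ?thesis"
    then have "h t - (fst g + snd g * t) \<le> 0" by simp
    moreover have "0 \<le> h 1 - (fst g + snd g * 1)" using negA[OF gA] by simp
    moreover have "\<forall>x. t \<le> x \<and> x \<le> 1 \<longrightarrow> isCont (\<lambda>s. h s - (fst g + snd g * s)) x"
      by (auto intro!: continuous_intros cont)
    ultimately obtain s where s: "t \<le> s" "s \<le> 1" "h s - (fst g + snd g * s) = 0"
      using IVT[of "\<lambda>s. h s - (fst g + snd g * s)" t 0 1] t by auto
    then have "s \<in> Z" unfolding Z_def using gA t t1r by auto
    then have "s \<le> t1" by (rule upper)
    with s t show False by simp
  qed
  have key: "\<exists>g\<in>L. h t = fst g + snd g * t \<and> fst g + snd g * t1 \<noteq> h t1"
    if t: "t1 < t" "t \<le> 1" for t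
  proof -
    obtain a b where ab: "(a,b)\<in>L" "h t = a + b*t" using cov[of t] t t1r by auto
    have "(a,b) \<notin> A"
    proof
      assume "(a,b)\<in>A"
      then have "t \<in> Z" unfolding Z_def using ab t t1r by (auto intro!: bexI[of _ "(a,b)"])
      then have "t \<le> t1" by (rule upper)
      with t show False by simp
    qed
    then have a0: "a > h 0" using ab unfolding A_def by auto
    have "a + b * t1 \<noteq> h t1"
    proof
      assume eq: "a + b * t1 = h t1"
      have g00: "fst g0 \<le> h 0" using g0A unfolding A_def by auto
      have gt: "fst g0 + snd g0 * t < h t" using below[OF g0A t] .
      define d0 where "d0 = a - fst g0"
      define \<delta> where "\<delta> = b - snd g0"
      have "d0 > 0" using a0 g00 unfolding d0_def by simp
      have e1: "d0 + \<delta> * t1 = 0" using eq g0t1 unfolding d0_def \<delta>_def by (simp add: algebra_simps)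
      have e2: "d0 + \<delta> * t > 0" using gt ab unfolding d0_def \<delta>_def by (simp add: algebra_simps)
      have "\<delta> < 0"
      proof (rule ccontr)
        assume "\<not> \<delta> < 0"
        then have "\<delta> * t1 \<ge> 0" using t1r by simp
        with e1 \<open>d0 > 0\<close> show False by simp
      qed
      then have "\<delta> * t < \<delta> * t1" using t by (simp add: mult_less_cancel_left)
      with e1 e2 show False by simp
    qed
    then show ?thesis using ab by (intro bexI[of _ "(a,b)"]) auto
  qed
  define W where "W = (\<Union>g\<in>{g\<in>L. fst g + snd g * t1 \<noteq> h t1}. {t. h t = fst g + snd g * t})"
  have clW: "closed W" unfolding W_def
    by (intro closed_UN ballI closed_Collect_eq continuous_intros)
       (auto intro: cont continuous_at_imp_continuous_on finite_subset[OF _ fin])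
  have "t1 \<notin> W" unfolding W_def by auto
  then obtain e where e: "e > 0" "\<And>y. dist y t1 < e \<Longrightarrow> y \<notin> W"
    using clW unfolding closed_def open_dist by (metis ComplI ComplD)
  define t where "t = min 1 (t1 + e/2)"
  have tt: "t1 < t" "t \<le> 1" "dist t t1 < e" using e t1lt unfolding t_def dist_real_def by auto
  then have "t \<notin> W" using e by auto
  moreover have "t \<in> W" using key[OF tt(1,2)] unfolding W_def by blast
  ultimately show False by simp
qed


definition aff :: "real \<times> (real^'n) \<Rightarrow> real^'n \<Rightarrow> real" where
  "aff g x = fst g + (\<Sum>j\<in>UNIV. snd g $ j * x $ j)"

definition stoch :: "real^'n \<Rightarrow> bool" where
  "stoch p \<longleftrightarrow> (\<forall>j. 0 \<le> p $ j \<and> p $ j \<in> \<rat>) \<and> (\<Sum>j\<in>UNIV. p $ j) = 1"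

lemma aw_const: "\<not> is_rand w \<Longrightarrow> absorb_within E q k w v = (if w = v then 1 else 0)"
  by (cases k) auto

lemma absorb_const: "\<not> is_rand w \<Longrightarrow> absorb E q w v = (if w = v then 1 else 0)"
  unfolding absorb_def by (simp add: aw_const)

lemma graph_constr:
  fixes Ts :: "'n::finite \<Rightarrow> (real \<times> (real^'n)) set set"
  assumes finTs: "\<And>i. finite (Ts i)" and neTs: "\<And>i. Ts i \<noteq> {}"
    and finT: "\<And>i T. T \<in> Ts i \<Longrightarrow> finite T" and neT: "\<And>i T. T \<in> Ts i \<Longrightarrow> T \<noteq> {}"
    and st: "\<And>i T g. T \<in> Ts i \<Longrightarrow> g \<in> T \<Longrightarrow> stoch (snd g)"
  shows "\<exists>m R E r q. game_graph m R E r q \<and>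
          (\<forall>x. encoded_operator m E r q x = (\<chi> i. Min ((\<lambda>T. Max ((\<lambda>g. aff g x) ` T)) ` Ts i)))"
proof -
  define H where "H = (\<Union>i. \<Union>(Ts i))"
  have finH: "finite H" unfolding H_def using finTs finT by auto
  define K where "K = card H"
  obtain hh where hh: "bij_betw hh {0..<K} H" using ex_bij_betw_nat_finite[OF finH] unfolding K_def by blast
  define MX where "MX = Sigma UNIV Ts"
  have finMX: "finite MX" unfolding MX_def using finTs by auto
  define m where "m = card MX"
  obtain mx where mx: "bij_betw mx {0..<m} MX" using ex_bij_betw_nat_finite[OF finMX] unfolding m_def by blast
  have "MX \<noteq> {}" unfolding MX_def using neTs by auto
  then have m0: "m > 0" unfolding m_def using finMX by auto
  define p where "p k = snd (hh k)" for k
  define E1 :: "'n edge set" where "E1 = {(MinV i, MaxV w) | i w. w < m \<and> fst (mx w) = i}"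
  define E2 :: "'n edge set" where "E2 = {(MaxV w, RandV k) | w k. w < m \<and> k < K \<and> hh k \<in> snd (mx w)}"
  define E3 :: "'n edge set" where "E3 = {(RandV k, MinV u) | k u. k < K \<and> p k $ u > 0}"
  define E :: "'n edge set" where "E = E1 \<union> E2 \<union> E3"
  define r :: "'n edge \<Rightarrow> real" where "r e = (case snd e of RandV k \<Rightarrow> fst (hh k) | _ \<Rightarrow> 0)" for e
  define q :: "'n edge \<Rightarrow> real" where
    "q e = (case fst e of RandV k \<Rightarrow> (case snd e of MinV u \<Rightarrow> p k $ u | _ \<Rightarrow> 0) | _ \<Rightarrow> 0)" for e
  define R where "R = {..<K}"
  have hhH: "hh k \<in> H" if "k < K" for k using hh that unfolding bij_betw_def by auto
  have stH: "stoch (snd g)" if "g \<in> H" for g using that st unfolding H_def by blast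
  have stp: "stoch (p k)" if "k < K" for k using stH[OF hhH[OF that]] unfolding p_def .
  have mxMX: "mx w \<in> MX" if "w < m" for w using mx that unfolding bij_betw_def by auto
  have Ecl: "(is_min a \<and> is_max b) \<or> (is_max a \<and> is_rand b) \<or> (is_rand a \<and> is_min b)"
    if "(a,b) \<in> E" for a b using that unfolding E_def E1_def E2_def E3_def by auto
  have OutRand: "Out E (RandV k) = (\<lambda>u. (RandV k, MinV u)) ` {u. p k $ u > 0}" if "k < K" for k
    using that unfolding Out_def E_def E1_def E2_def E3_def by auto
  have OutMax: "Out E (MaxV w) = (\<lambda>k. (MaxV w, RandV k)) ` {k. k < K \<and> hh k \<in> snd (mx w)}"
    if "w < m" for w
    using that unfolding Out_def E_def E1_def E2_def E3_def by auto
  have OutMin: "Out E (MinV i) = (\<lambda>w. (MinV i, MaxV w)) ` {w. w < m \<and> fst (mx w) = i}" for i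
    unfolding Out_def E_def E1_def E2_def E3_def by auto
  have pos_ex: "\<exists>u. p k $ u > 0" if "k < K" for k
  proof (rule ccontr)
    assume "\<not> ?thesis"
    then have "\<forall>u. p k $ u = 0" using stp[OF that] unfolding stoch_def by (metis order.not_eq_order_implies_strict)
    then show False using stp[OF that] unfolding stoch_def by simp
  qed
  have sumq: "(\<Sum>e\<in>Out E (RandV k). q e) = 1" if "k < K" for k
  proof -
    have "(\<Sum>e\<in>Out E (RandV k). q e) = (\<Sum>u\<in>{u. p k $ u > 0}. p k $ u)"
      unfolding OutRand[OF that] by (subst sum.reindex) (auto simp: inj_on_def q_def)
    also have "\<dots> = (\<Sum>u\<in>UNIV. p k $ u)"
      using stp[OF that] unfolding stoch_def by (intro sum.mono_neutral_left) (auto simp: order.not_eq_order_implies_strict)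
    also have "\<dots> = 1" using stp[OF that] unfolding stoch_def by simp
    finally show ?thesis .
  qed
  have gg: "game_graph m R E r q"
    unfolding game_graph_def
  proof (intro conjI)
    show "0 < m" by (rule m0)
    show "finite R" unfolding R_def by simp
    show "E \<subseteq> vertices m R \<times> vertices m R"
      unfolding E_def E1_def E2_def E3_def vertices_def R_def by auto
    show "\<forall>v\<in>(vertices m R :: 'n vertex set). Out E v \<noteq> {}"
    proof
      fix v :: "'n vertex" assume v: "v \<in> vertices m R"
      show "Out E v \<noteq> {}"
      proof (cases v)
        case (MinV i)
        obtain T where T: "T \<in> Ts i" using neTs by blast
        then have "(i,T) \<in> MX" unfolding MX_def by auto
        then obtain w where "w < m" "mx w = (i,T)" using mx unfolding bij_betw_def by force
        then show ?thesis unfolding MinV OutMin by auto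
      next
        case (MaxV w)
        then have w: "w < m" using v unfolding vertices_def by auto
        obtain i T where iT: "mx w = (i,T)" "T \<in> Ts i" using mxMX[OF w] unfolding MX_def by auto
        obtain g where g: "g \<in> T" using neT[OF iT(2)] by blast
        then have "g \<in> H" using iT unfolding H_def by auto
        then obtain k where "k < K" "hh k = g" using hh unfolding bij_betw_def by force
        then show ?thesis unfolding MaxV OutMax[OF w] using g iT by auto
      next
        case (RandV k)
        then have k: "k < K" using v unfolding vertices_def R_def by auto
        show ?thesis unfolding RandV OutRand[OF k] using pos_ex[OF k] by auto
      qed
    qed
    show "\<forall>e\<in>E. is_rand (fst e) \<longrightarrow> q e \<in> \<rat> \<and> 0 < q e"
    proof (intro ballI impI)
      fix e assume "e \<in> E" "is_rand (fst e)"
      then obtain k u where "e = (RandV k, MinV u)" "k < K" "p k $ u > 0"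
        unfolding E_def E1_def E2_def E3_def by auto
      then show "q e \<in> \<rat> \<and> 0 < q e" using stp unfolding q_def stoch_def by auto
    qed
    show "\<forall>v\<in>(vertices m R :: 'n vertex set). is_rand v \<longrightarrow> (\<Sum>e\<in>Out E v. q e) = 1"
      using sumq unfolding vertices_def R_def by auto
    show "\<forall>xs. is_path E xs \<and> is_min (hd xs) \<and> is_min (last xs) \<longrightarrow> (\<exists>w\<in>set xs. is_max w)"
    proof (intro allI impI)
      fix xs :: "'n vertex list" assume a: "is_path E xs \<and> is_min (hd xs) \<and> is_min (last xs)"
      then have l: "length xs \<ge> 2" and e: "(xs!0, xs!1) \<in> E" unfolding is_path_def by auto
      have "hd xs = xs!0" using l by (cases xs) auto
      then have "is_max (xs!1)" using Ecl[OF e] a by (cases "xs!0"; cases "xs!1") auto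
      moreover have "xs!1 \<in> set xs" using l by simp
      ultimately show "\<exists>w\<in>set xs. is_max w" by blast
    qed
    show "\<forall>xs. is_path E xs \<and> is_max (hd xs) \<and> is_max (last xs) \<longrightarrow> (\<exists>w\<in>set xs. is_min w)"
    proof (intro allI impI)
      fix xs :: "'n vertex list" assume a: "is_path E xs \<and> is_max (hd xs) \<and> is_max (last xs)"
      then have l: "length xs \<ge> 2" and e: "(xs!0, xs!1) \<in> E" unfolding is_path_def by auto
      have "hd xs = xs!0" using l by (cases xs) auto
      then have r1: "is_rand (xs!1)" using Ecl[OF e] a by (cases "xs!0"; cases "xs!1") auto
      show "\<exists>w\<in>set xs. is_min w"
      proof (cases "length xs = 2")
        case True
        then have "last xs = xs!1" by (subst last_conv_nth) auto
        with r1 a show ?thesis by (cases "xs!1") auto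
      next
        case False
        with l have l3: "length xs \<ge> 3" by simp
        then have e2: "(xs!1, xs!2) \<in> E" using a unfolding is_path_def
          by (simp add: numeral_2_eq_2)
        then have "is_min (xs!2)" using Ecl[OF e2] r1 by (cases "xs!1"; cases "xs!2") auto
        moreover have "xs!2 \<in> set xs" using l3 by simp
        ultimately show ?thesis by blast
      qed
    qed
    show "\<forall>v\<in>(vertices m R :: 'n vertex set). is_rand v \<longrightarrow>
        (\<exists>xs. is_path E xs \<and> hd xs = v \<and> (is_min (last xs) \<or> is_max (last xs)))"
    proof (intro ballI impI)
      fix v :: "'n vertex" assume v: "v \<in> vertices m R" "is_rand v"
      then obtain k where k: "v = RandV k" "k < K" unfolding vertices_def R_def by auto
      obtain u where u: "p k $ u > 0" using pos_ex[OF k(2)] by blast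
      have "is_path E [RandV k, MinV u]" unfolding is_path_def E_def E3_def using k u
        by (auto simp: less_Suc_eq)
      then show "\<exists>xs. is_path E xs \<and> hd xs = v \<and> (is_min (last xs) \<or> is_max (last xs))"
        using k by (intro exI[of _ "[RandV k, MinV u]"]) auto
    qed
  qed
  have absR: "absorb E q (RandV k) (MinV u) = p k $ u" if k: "k < K" for k u
  proof -
    have "absorb_within E q (Suc j) (RandV k) (MinV u) = p k $ u" for j
    proof -
      have "absorb_within E q (Suc j) (RandV k) (MinV u) =
            (\<Sum>e\<in>Out E (RandV k). q e * absorb_within E q j (snd e) (MinV u))" by simp
      also have "\<dots> = (\<Sum>u'\<in>{u'. p k $ u' > 0}. p k $ u' * (if u' = u then 1 else 0))"
        unfolding OutRand[OF k] by (subst sum.reindex) (auto simp: inj_on_def q_def aw_const)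
      also have "\<dots> = p k $ u"
        using stp[OF k] unfolding stoch_def
        by (auto simp: sum.delta' order.not_eq_order_implies_strict if_distrib cong: if_cong)
           (metis order.not_eq_order_implies_strict)
      finally show ?thesis .
    qed
    then have "(\<lambda>j. absorb_within E q (Suc j) (RandV k) (MinV u)) = (\<lambda>j. p k $ u)" by (rule ext)
    then have "(\<lambda>j. absorb_within E q (Suc j) (RandV k) (MinV u)) \<longlonglongrightarrow> p k $ u"
      by (simp only: tendsto_const)
    then have "(\<lambda>j. absorb_within E q j (RandV k) (MinV u)) \<longlonglongrightarrow> p k $ u"
      by (rule LIMSEQ_imp_Suc)
    then show ?thesis unfolding absorb_def by (rule limI)
  qed
  have enc: "encoded_operator m E r q x = (\<chi> i. Min ((\<lambda>T. Max ((\<lambda>g. aff g x) ` T)) ` Ts i))" for x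
  proof -
    have inner: "Max ((\<lambda>e'. r e' + (\<Sum>u\<in>UNIV. absorb E q (snd e') (MinV u) * x $ u)) ` Out E (MaxV w))
        = Max ((\<lambda>g. aff g x) ` snd (mx w))" if w: "w < m" for w
    proof -
      have "(\<lambda>e'. r e' + (\<Sum>u\<in>UNIV. absorb E q (snd e') (MinV u) * x $ u)) ` Out E (MaxV w)
          = (\<lambda>k. aff (hh k) x) ` {k. k < K \<and> hh k \<in> snd (mx w)}"
        unfolding OutMax[OF w] image_image
        by (intro image_cong refl) (simp add: r_def absR aff_def p_def)
      also have "\<dots> = (\<lambda>g. aff g x) ` (hh ` {k. k < K \<and> hh k \<in> snd (mx w)})"
        by (simp add: image_image)
      also have "hh ` {k. k < K \<and> hh k \<in> snd (mx w)} = snd (mx w)"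
      proof -
        have "snd (mx w) \<subseteq> H" using mxMX[OF w] unfolding MX_def H_def by (auto simp: mem_Times_iff) blast
        then show ?thesis using hh unfolding bij_betw_def by force
      qed
      finally show ?thesis by simp
    qed
    have r0: "r (a, MaxV w) = 0" for a w by (simp add: r_def)
    have sd: "(\<Sum>w<m. (if MaxV w0 = (MaxV w :: 'n vertex) then 1 else 0) * X w) = X w0"
      if "w0 < m" for w0 and X :: "nat \<Rightarrow> real"
    proof -
      have "(\<Sum>w<m. (if MaxV w0 = (MaxV w :: 'n vertex) then 1 else 0) * X w) = (\<Sum>w<m. if w0 = w then X w else 0)"
        by (intro sum.cong) auto
      also have "\<dots> = X w0" using that by simp
      finally show ?thesis .
    qed
    have "encoded_operator m E r q x $ i = Min ((\<lambda>T. Max ((\<lambda>g. aff g x) ` T)) ` Ts i)" for i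
    proof -
      have "(\<lambda>e. r e + (\<Sum>w<m. absorb E q (snd e) (MaxV w) *
              Max ((\<lambda>e'. r e' + (\<Sum>u\<in>UNIV. absorb E q (snd e') (MinV u) * x $ u)) ` Out E (MaxV w))))
          ` Out E (MinV i) = (\<lambda>w. Max ((\<lambda>g. aff g x) ` snd (mx w))) ` {w. w < m \<and> fst (mx w) = i}"
        unfolding OutMin image_image
        by (intro image_cong refl) (auto simp: r0 absorb_const inner sd simp del: vertex.inject)
      also have "\<dots> = (\<lambda>T. Max ((\<lambda>g. aff g x) ` T)) ` (snd ` mx ` {w. w < m \<and> fst (mx w) = i})"
        by (simp add: image_image)
      also have "snd ` mx ` {w. w < m \<and> fst (mx w) = i} = Ts i"
      proof
        show "snd ` mx ` {w. w < m \<and> fst (mx w) = i} \<subseteq> Ts i"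
          using mxMX unfolding MX_def by force
        show "Ts i \<subseteq> snd ` mx ` {w. w < m \<and> fst (mx w) = i}"
        proof
          fix T assume "T \<in> Ts i"
          then have "(i,T) \<in> MX" unfolding MX_def by auto
          then obtain w where "w < m" "mx w = (i,T)" using mx unfolding bij_betw_def by force
          then show "T \<in> snd ` mx ` {w. w < m \<and> fst (mx w) = i}"
            by (intro image_eqI[of _ snd "(i,T)"]) (auto intro!: image_eqI[of _ mx w])
        qed
      qed
      finally show ?thesis unfolding encoded_operator_def by simp
    qed
    then show ?thesis by (simp add: vec_eq_iff)
  qed
  show ?thesis using gg enc by blast
qed


lemma aff_line:
  "aff g (y + t *\<^sub>R (x - y)) = aff g y + t * (\<Sum>j\<in>UNIV. snd g $ j * (x - y) $ j)"
  unfolding aff_def by (simp add: algebra_simps sum.distrib sum_distrib_left sum_subtractf)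

lemma keyn:
  fixes f :: "real^'n::finite \<Rightarrow> real" and G :: "(real \<times> (real^'n)) set"
  assumes fin: "finite G" and cont: "continuous_on UNIV f" and cov: "\<And>z. \<exists>g\<in>G. f z = aff g z"
  shows "\<exists>g\<in>G. aff g y \<le> f y \<and> aff g x \<ge> f x"
proof -
  define h where "h t = f (y + t *\<^sub>R (x - y))" for t
  define L where "L = (\<lambda>g. (aff g y, \<Sum>j\<in>UNIV. snd g $ j * (x - y) $ j)) ` G"
  have ch: "isCont h t" for t
  proof -
    have "isCont f (y + t *\<^sub>R (x - y))" using cont by (simp add: continuous_on_eq_continuous_at)
    moreover have "isCont (\<lambda>t. y + t *\<^sub>R (x - y)) t" by (intro continuous_intros)
    ultimately show ?thesis unfolding h_def by (rule isCont_o2[rotated])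
  qed
  have covL: "\<exists>(a,b)\<in>L. h t = a + b*t" for t
  proof -
    obtain g where g: "g \<in> G" "f (y + t *\<^sub>R (x - y)) = aff g (y + t *\<^sub>R (x - y))" using cov by blast
    then show ?thesis unfolding L_def h_def by (auto simp: aff_line mult.commute)
  qed
  obtain a b where ab: "(a,b) \<in> L" "a \<le> h 0" "a + b \<ge> h 1"
    using oneD[of L h] fin covL ch unfolding L_def by fastforce
  then obtain g where g: "g \<in> G" "a = aff g y" "b = (\<Sum>j\<in>UNIV. snd g $ j * (x - y) $ j)"
    unfolding L_def by auto
  have "aff g x = a + b" using aff_line[of g y 1 x] g by simp
  moreover have "h 0 = f y" "h 1 = f x" unfolding h_def by simp_all
  ultimately show ?thesis using g ab by auto
qed

lemma minmax_fin:
  fixes f :: "real^'n::finite \<Rightarrow> real" and G :: "(real \<times> (real^'n)) set"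
  assumes fin: "finite G"
  shows "finite ((\<lambda>y. {g\<in>G. aff g y \<le> f y}) ` UNIV)"
  by (rule finite_subset[of _ "Pow G"]) (auto simp: fin)

lemma minmax_T:
  fixes f :: "real^'n::finite \<Rightarrow> real" and G :: "(real \<times> (real^'n)) set"
  assumes fin: "finite G" and cov: "\<And>z. \<exists>g\<in>G. f z = aff g z"
    and T: "T \<in> (\<lambda>y. {g\<in>G. aff g y \<le> f y}) ` UNIV"
  shows "T \<subseteq> G \<and> T \<noteq> {} \<and> finite T"
proof -
  obtain y where y: "T = {g\<in>G. aff g y \<le> f y}" using T by auto
  obtain g where "g \<in> G" "f y = aff g y" using cov by blast
  then have "g \<in> T" using y by auto
  moreover have "T \<subseteq> G" using y by auto
  ultimately show ?thesis using fin by (meson finite_subset empty_iff)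
qed

lemma minmax:
  fixes f :: "real^'n::finite \<Rightarrow> real" and G :: "(real \<times> (real^'n)) set"
  assumes fin: "finite G" and cont: "continuous_on UNIV f" and cov: "\<And>z. \<exists>g\<in>G. f z = aff g z"
  shows "f x = Min ((\<lambda>T. Max ((\<lambda>g. aff g x) ` T)) ` ((\<lambda>y. {g\<in>G. aff g y \<le> f y}) ` UNIV))"
proof -
  define Ty where "Ty y = {g\<in>G. aff g y \<le> f y}" for y
  have fT: "finite (range Ty)" unfolding Ty_def using minmax_fin[OF fin] .
  have TT: "Ty y \<subseteq> G \<and> Ty y \<noteq> {} \<and> finite (Ty y)" for y
    using minmax_T[OF fin cov, of "Ty y"] unfolding Ty_def by auto
  have ge: "Max ((\<lambda>g. aff g x) ` Ty y) \<ge> f x" for y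
  proof -
    obtain g where "g \<in> G" "aff g y \<le> f y" "aff g x \<ge> f x" using keyn[OF fin cont cov, where x=x and y=y] by blast
    then have "g \<in> Ty y" unfolding Ty_def by auto
    then have "aff g x \<le> Max ((\<lambda>g. aff g x) ` Ty y)" using TT by (intro Max_ge) auto
    then show ?thesis using \<open>aff g x \<ge> f x\<close> by simp
  qed
  have le: "Max ((\<lambda>g. aff g x) ` Ty x) \<le> f x"
    using TT[of x] by (subst Max_le_iff) (auto simp: Ty_def)
  have A: "f x \<le> Min ((\<lambda>T. Max ((\<lambda>g. aff g x) ` T)) ` range Ty)"
    using fT ge by (subst Min_ge_iff) auto
  have "Min ((\<lambda>T. Max ((\<lambda>g. aff g x) ` T)) ` range Ty) \<le> Max ((\<lambda>g. aff g x) ` Ty x)"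
    using fT by (intro Min_le) auto
  with A le have "f x = Min ((\<lambda>T. Max ((\<lambda>g. aff g x) ` T)) ` range Ty)" by linarith
  moreover have "Ty = (\<lambda>y. {g\<in>G. aff g y \<le> f y})" by (rule ext) (simp add: Ty_def)
  ultimately show ?thesis by (simp only:)
qed


definition VQ :: "('n::finite) lin_constr set \<Rightarrow> ((real^'n) \<times> (real^'n)) set" where
  "VQ Q = {(u,w). \<forall>(a,c,b)\<in>Q. a \<bullet> u + c \<bullet> w = 0}"

lemma VQ_add:
  assumes h1: "(u1,w1) \<in> VQ Q" and h2: "(u2,w2) \<in> VQ Q" shows "(u1+u2, w1+w2) \<in> VQ Q"
  unfolding VQ_def
proof (clarify)
  fix a c b assume "(a,c,b) \<in> Q"
  then have "a \<bullet> u1 + c \<bullet> w1 = 0" "a \<bullet> u2 + c \<bullet> w2 = 0" using h1 h2 unfolding VQ_def by auto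
  then show "a \<bullet> (u1 + u2) + c \<bullet> (w1 + w2) = 0" by (simp add: inner_add_right)
qed

lemma VQ_scale: "(u,w) \<in> VQ Q \<Longrightarrow> (k *\<^sub>R u, k *\<^sub>R w) \<in> VQ Q"
  unfolding VQ_def by (auto simp: inner_scaleR_right simp flip: distrib_left)

lemma VQ_zero: "(0,0) \<in> VQ Q"
  unfolding VQ_def by auto

lemma VQ_sum: "finite A \<Longrightarrow> (\<forall>j\<in>A. (u j, w j) \<in> VQ Q) \<Longrightarrow> (\<Sum>j\<in>A. u j, \<Sum>j\<in>A. w j) \<in> VQ Q"
  by (induction A rule: finite_induct) (auto simp: VQ_zero VQ_add)

lemma VQ_diff:
  assumes h1: "(x,y) \<in> basic_semilinear_set S Q" and h2: "(x0,y0) \<in> basic_semilinear_set S Q"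
  shows "(x - x0, y - y0) \<in> VQ Q"
  unfolding VQ_def
proof (clarify)
  fix a c b assume "(a,c,b) \<in> Q"
  then have "a \<bullet> x + c \<bullet> y = b" "a \<bullet> x0 + c \<bullet> y0 = b" using h1 h2 unfolding basic_semilinear_set_def by auto
  then show "a \<bullet> (x - x0) + c \<bullet> (y - y0) = 0" by (simp add: inner_diff_right)
qed

lemma P1:
  fixes F :: "real^'n::finite \<Rightarrow> real^'n"
  assumes finS: "finite S" and gr: "\<And>x y. (x,y) \<in> basic_semilinear_set S Q \<Longrightarrow> y = F x"
    and z0: "(x0,y0) \<in> basic_semilinear_set S Q" and uw: "(u,w) \<in> VQ Q"
  shows "\<exists>\<epsilon>>0. \<forall>t. 0 < t \<and> t < \<epsilon> \<longrightarrow> F (x0 + t *\<^sub>R u) = y0 + t *\<^sub>R w"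
proof -
  define Ot where "Ot = (\<Inter>s\<in>S. {t::real. snd (snd s) < fst s \<bullet> (x0 + t *\<^sub>R u) + fst (snd s) \<bullet> (y0 + t *\<^sub>R w)})"
  have "open Ot" unfolding Ot_def
    by (intro open_INT[OF finS] ballI open_Collect_less continuous_intros)
  moreover have "0 \<in> Ot" using z0 unfolding Ot_def basic_semilinear_set_def by auto
  ultimately obtain e where e: "e > 0" "\<And>t. dist t 0 < e \<Longrightarrow> t \<in> Ot"
    unfolding open_dist by blast
  show ?thesis
  proof (intro exI[of _ e] conjI allI impI)
    show "e > 0" by (rule e)
    fix t :: real assume t: "0 < t \<and> t < e"
    then have "t \<in> Ot" using e by (auto simp: dist_real_def)
    then have S: "\<forall>(a,c,b)\<in>S. a \<bullet> (x0 + t *\<^sub>R u) + c \<bullet> (y0 + t *\<^sub>R w) > b"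
      unfolding Ot_def by auto
    have Q: "\<forall>(a,c,b)\<in>Q. a \<bullet> (x0 + t *\<^sub>R u) + c \<bullet> (y0 + t *\<^sub>R w) = b"
    proof (intro ballI, clarify)
      fix a c b assume "(a,c,b) \<in> Q"
      then have "a \<bullet> x0 + c \<bullet> y0 = b" "a \<bullet> u + c \<bullet> w = 0"
        using z0 uw unfolding basic_semilinear_set_def VQ_def by auto
      then show "a \<bullet> (x0 + t *\<^sub>R u) + c \<bullet> (y0 + t *\<^sub>R w) = b"
        by (simp add: inner_add_right algebra_simps flip: distrib_left)
    qed
    have "(x0 + t *\<^sub>R u, y0 + t *\<^sub>R w) \<in> basic_semilinear_set S Q"
      unfolding basic_semilinear_set_def using S Q by auto
    then show "F (x0 + t *\<^sub>R u) = y0 + t *\<^sub>R w" using gr by simp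
  qed
qed

lemma P2:
  fixes F :: "real^'n::finite \<Rightarrow> real^'n"
  assumes finS: "finite S" and gr: "\<And>x y. (x,y) \<in> basic_semilinear_set S Q \<Longrightarrow> y = F x"
    and z0: "(x0,y0) \<in> basic_semilinear_set S Q" and uw: "(u,w) \<in> VQ Q" and uw': "(u,w') \<in> VQ Q"
  shows "w = w'"
proof -
  obtain e where e: "e > 0" "\<And>t. 0 < t \<and> t < e \<Longrightarrow> F (x0 + t *\<^sub>R u) = y0 + t *\<^sub>R w"
    using P1[where F=F and S=S and Q=Q, OF finS gr z0 uw] by blast
  obtain e' where e': "e' > 0" "\<And>t. 0 < t \<and> t < e' \<Longrightarrow> F (x0 + t *\<^sub>R u) = y0 + t *\<^sub>R w'"
    using P1[where F=F and S=S and Q=Q, OF finS gr z0 uw'] by blast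
  define t where "t = min e e' / 2"
  have t: "0 < t" "t < e" "t < e'" using e e' unfolding t_def by auto
  have "y0 + t *\<^sub>R w = y0 + t *\<^sub>R w'" using e(2)[of t] e'(2)[of t] t by simp
  then show ?thesis using t by simp
qed

lemma basis_exp_R: "(\<Sum>j\<in>UNIV. (u::real^'n::finite) $ j *\<^sub>R axis j 1) = u"
proof -
  have "(\<Sum>x\<in>UNIV. u $ x * (if i = x then 1 else 0)) = u $ i" for i
  proof -
    have "(\<Sum>x\<in>UNIV. u $ x * (if i = x then 1 else 0)) = (\<Sum>x\<in>UNIV. if i = x then u $ x else 0)"
      by (rule sum.cong) auto
    then show ?thesis by simp
  qed
  then show ?thesis by (simp add: vec_eq_iff sum_component axis_def)
qed

lemma inner_axis1: "(a::real^'n::finite) \<bullet> axis j 1 = a $ j"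
  by (simp add: inner_axis)

lemma psi_sum:
  fixes \<psi> :: "real \<Rightarrow> real"
  assumes add: "\<And>x y. \<psi> (x+y) = \<psi> x + \<psi> y"
  shows "finite A \<Longrightarrow> \<psi> (\<Sum>j\<in>A. f j) = (\<Sum>j\<in>A. \<psi> (f j))"
proof (induction A rule: finite_induct)
  case empty
  have "\<psi> 0 = \<psi> 0 + \<psi> 0" using add[of 0 0] by simp
  then have "\<psi> 0 = 0" by linarith
  then show ?case by simp
next
  case (insert x F)
  then show ?case by (simp add: add)
qed

lemma full_piece:
  fixes F :: "real^'n::finite \<Rightarrow> real^'n"
  assumes finS: "finite S" and gr: "\<And>x y. (x,y) \<in> basic_semilinear_set S Q \<Longrightarrow> y = F x"
    and z0: "(x0,y0) \<in> basic_semilinear_set S Q" and full: "\<forall>u. \<exists>w. (u,w) \<in> VQ Q"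
    and rat: "\<forall>C\<in>Q. rational_constr C" and mono: "monotone_map F" and hom: "homogeneous_map F"
  shows "\<exists>c W. (\<forall>i. stoch ((W::real^'n^'n) $ i)) \<and>
     (\<forall>x y. (x,y) \<in> basic_semilinear_set S Q \<longrightarrow> (\<forall>i. F x $ i = c $ i + (\<Sum>j\<in>UNIV. W $ i $ j * x $ j)))"
proof -
  define wf where "wf u = (SOME w. (u,w) \<in> VQ Q)" for u
  have wfV: "(u, wf u) \<in> VQ Q" for u unfolding wf_def using full by (metis someI_ex)
  have wfU: "w = wf u" if "(u,w) \<in> VQ Q" for u w
    by (rule P2[where F=F and S=S and Q=Q, OF finS gr z0 that wfV])
  have F0: "y0 = F x0" using gr z0 by blast
  define W :: "real^'n^'n" where "W = (\<chi> i j. wf (axis j 1) $ i)"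
  have lin: "wf u = (\<Sum>j\<in>UNIV. u $ j *\<^sub>R wf (axis j 1))" for u
  proof -
    have "(\<Sum>j\<in>UNIV. u $ j *\<^sub>R axis j 1, \<Sum>j\<in>UNIV. u $ j *\<^sub>R wf (axis j 1)) \<in> VQ Q"
      by (intro VQ_sum ballI VQ_scale wfV) simp
    then have "(u, \<Sum>j\<in>UNIV. u $ j *\<^sub>R wf (axis j 1)) \<in> VQ Q" by (simp add: basis_exp_R)
    then show ?thesis using wfU by simp
  qed
  have linc: "wf u $ i = (\<Sum>j\<in>UNIV. W $ i $ j * u $ j)" for u i
    by (subst lin) (simp add: sum_component W_def mult.commute)
  define c :: "real^'n" where "c = (\<chi> i. y0 $ i - (\<Sum>j\<in>UNIV. W $ i $ j * x0 $ j))"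
  have rep: "\<forall>i. F x $ i = c $ i + (\<Sum>j\<in>UNIV. W $ i $ j * x $ j)"
    if xy: "(x,y) \<in> basic_semilinear_set S Q" for x y
  proof
    fix i
    have "y = F x" using gr xy by blast
    have "(x - x0, y - y0) \<in> VQ Q" by (rule VQ_diff[OF xy z0])
    then have "y - y0 = wf (x - x0)" by (rule wfU)
    then have "y = y0 + wf (x - x0)" by (metis add.commute diff_add_cancel)
    then have "y $ i - y0 $ i = (\<Sum>j\<in>UNIV. W $ i $ j * (x $ j - x0 $ j))" using linc[of "x - x0" i] by simp
    then show "F x $ i = c $ i + (\<Sum>j\<in>UNIV. W $ i $ j * x $ j)"
      using \<open>y = F x\<close> unfolding c_def by (simp add: right_diff_distrib sum_subtractf)
  qed
  have nonneg: "W $ i $ j \<ge> 0" for i j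
  proof -
    obtain e where e: "e > 0" "\<And>t. 0 < t \<and> t < e \<Longrightarrow> F (x0 + t *\<^sub>R axis j 1) = y0 + t *\<^sub>R wf (axis j 1)"
      using P1[where F=F and S=S and Q=Q, OF finS gr z0 wfV] by blast
    define t where "t = e / 2"
    have t: "0 < t" "t < e" using e unfolding t_def by auto
    have "\<forall>k. x0 $ k \<le> (x0 + t *\<^sub>R axis j 1) $ k" using t by (simp add: axis_def)
    then have "F x0 $ i \<le> F (x0 + t *\<^sub>R axis j 1) $ i" using mono unfolding monotone_map_def by blast
    also have "\<dots> = y0 $ i + t * W $ i $ j" using e(2)[of t] t by (simp add: W_def)
    finally have "0 \<le> t * W $ i $ j" using F0 by simp
    then show ?thesis using t by (simp add: zero_le_mult_iff)
  qed
  have sum1: "(\<Sum>j\<in>UNIV. W $ i $ j) = 1" for i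
  proof -
    define one :: "real^'n" where "one = (\<chi> j. 1)"
    obtain e where e: "e > 0" "\<And>t. 0 < t \<and> t < e \<Longrightarrow> F (x0 + t *\<^sub>R one) = y0 + t *\<^sub>R wf one"
      using P1[where F=F and S=S and Q=Q, OF finS gr z0 wfV] by blast
    define t where "t = e / 2"
    have t: "0 < t" "t < e" using e unfolding t_def by auto
    have "x0 + t *\<^sub>R one = (\<chi> i. t) + x0" by (simp add: vec_eq_iff one_def)
    then have "F (x0 + t *\<^sub>R one) = (\<chi> i. t) + y0" using hom F0 unfolding homogeneous_map_def by metis
    then have "t + y0 $ i = y0 $ i + t * wf one $ i" using e(2)[of t] t by (simp add: vec_eq_iff)
    then have "wf one $ i = 1" using t by simp
    then show ?thesis using linc[of one i] by (simp add: one_def)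
  qed
  obtain \<psi> :: "real \<Rightarrow> real" where
    padd: "\<And>x y. \<psi>(x+y) = \<psi> x + \<psi> y" and pmul: "\<And>q x. q\<in>\<rat> \<Longrightarrow> \<psi>(q*x) = q * \<psi> x"
    and pq: "\<And>x. \<psi> x \<in> \<rat>" and pid: "\<And>q. q\<in>\<rat> \<Longrightarrow> \<psi> q = q"
    using rat_proj by blast
  have ratW: "W $ i $ j \<in> \<rat>" for i j
  proof -
    define w where "w = wf (axis j 1)"
    define w' :: "real^'n" where "w' = (\<chi> l. \<psi> (w $ l))"
    have "(axis j 1, w') \<in> VQ Q"
      unfolding VQ_def
    proof (clarify)
      fix a c b assume abc: "(a,c,b) \<in> Q"
      then have "a \<bullet> axis j 1 + c \<bullet> w = 0" using wfV[of "axis j 1"] unfolding VQ_def w_def by auto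
      then have eq: "a $ j + (\<Sum>l\<in>UNIV. c $ l * w $ l) = 0" unfolding inner_axis1 by (simp add: inner_vec_def)
      have ra: "a $ j \<in> \<rat>" and rc: "\<And>l. c $ l \<in> \<rat>"
        using rat abc unfolding rational_constr_def by auto
      have "\<psi> (a $ j + (\<Sum>l\<in>UNIV. c $ l * w $ l)) = a $ j + (\<Sum>l\<in>UNIV. c $ l * \<psi> (w $ l))"
        by (simp add: padd psi_sum[of \<psi>, OF padd] pmul[OF rc] pid[OF ra])
      moreover have "\<psi> 0 = 0" using padd[of 0 0] by simp
      ultimately have "a $ j + (\<Sum>l\<in>UNIV. c $ l * \<psi> (w $ l)) = 0" using eq by simp
      then show "a \<bullet> axis j 1 + c \<bullet> w' = 0" unfolding inner_axis1 by (simp add: inner_vec_def w'_def)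
    qed
    then have "w' = w" unfolding w_def by (rule wfU)
    then have "w $ i = \<psi> (w $ i)" unfolding w'_def by (simp add: vec_eq_iff)
    then show ?thesis using pq[of "w $ i"] by (simp add: W_def w_def)
  qed
  have "\<forall>i. stoch (W $ i)" unfolding stoch_def using nonneg sum1 ratW by auto
  then show ?thesis using rep by blast
qed

lemma F_lip:
  fixes F :: "real^'n::finite \<Rightarrow> real^'n"
  assumes mono: "monotone_map F" and hom: "homogeneous_map F"
  shows "F x $ i \<le> F y $ i + norm (x - y)"
proof -
  define d where "d = norm (x - y)"
  have "\<forall>j. x $ j \<le> ((\<chi> k. d) + y) $ j"
  proof
    fix j
    have "\<bar>(x - y) $ j\<bar> \<le> d" unfolding d_def by (rule component_le_norm_cart)
    then show "x $ j \<le> ((\<chi> k. d) + y) $ j" by simp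
  qed
  then have "F x $ i \<le> F ((\<chi> k. d) + y) $ i" using mono unfolding monotone_map_def by blast
  also have "\<dots> = d + F y $ i" using hom unfolding homogeneous_map_def by simp
  finally show ?thesis unfolding d_def by simp
qed

lemma F_cont:
  fixes F :: "real^'n::finite \<Rightarrow> real^'n"
  assumes mono: "monotone_map F" and hom: "homogeneous_map F"
  shows "continuous_on UNIV (\<lambda>x. F x $ i)"
proof (rule lipschitz_on_continuous_on)
  show "1-lipschitz_on UNIV (\<lambda>x. F x $ i)"
  proof (rule lipschitz_onI)
    fix x y :: "real^'n"
    have "F x $ i \<le> F y $ i + norm (x - y)" by (rule F_lip[OF mono hom])
    moreover have "F y $ i \<le> F x $ i + norm (y - x)" by (rule F_lip[OF mono hom])
    moreover have "norm (y - x) = norm (x - y)" by (rule norm_minus_commute)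
    ultimately show "dist (F x $ i) (F y $ i) \<le> 1 * dist x y"
      by (simp add: dist_real_def dist_norm abs_le_iff)
  qed simp
qed

lemma nonfull_hyper:
  fixes F :: "real^'n::finite \<Rightarrow> real^'n"
  assumes finS: "finite S" and gr: "\<And>x y. (x,y) \<in> basic_semilinear_set S Q \<Longrightarrow> y = F x"
    and z0: "(x0,y0) \<in> basic_semilinear_set S Q" and nf: "\<not> (\<forall>u. \<exists>w. (u,w) \<in> VQ Q)"
  shows "\<exists>v. v \<noteq> 0 \<and> (\<forall>x y. (x,y) \<in> basic_semilinear_set S Q \<longrightarrow> v \<bullet> x = v \<bullet> x0)"
proof -
  define U where "U = {u. \<exists>w. (u,w) \<in> VQ Q}"
  have sub: "subspace U" unfolding subspace_def U_def
  proof (intro conjI ballI allI)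
    show "0 \<in> {u. \<exists>w. (u, w) \<in> VQ Q}" using VQ_zero by blast
  next
    fix x y assume "x \<in> {u. \<exists>w. (u, w) \<in> VQ Q}" "y \<in> {u. \<exists>w. (u, w) \<in> VQ Q}"
    then show "x + y \<in> {u. \<exists>w. (u, w) \<in> VQ Q}" using VQ_add by blast
  next
    fix c :: real and x assume "x \<in> {u. \<exists>w. (u, w) \<in> VQ Q}"
    then show "c *\<^sub>R x \<in> {u. \<exists>w. (u, w) \<in> VQ Q}" using VQ_scale by blast
  qed
  have "U \<noteq> UNIV" using nf unfolding U_def by auto
  moreover have "span U = U" using sub span_eq_iff by blast
  ultimately have "span U \<noteq> UNIV" by metis
  then have "dim U \<noteq> DIM(real^'n)" using dim_eq_full by blast
  then have "dim U < DIM(real^'n)" using dim_subset_UNIV[of U] by linarith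
  then obtain v :: "real^'n" where v: "v \<noteq> 0" "\<And>y. y \<in> span U \<Longrightarrow> orthogonal v y"
    using orthogonal_to_subspace_exists by metis
  have "v \<bullet> x = v \<bullet> x0" if "(x,y) \<in> basic_semilinear_set S Q" for x y
  proof -
    have "x - x0 \<in> U" using VQ_diff[OF that z0] unfolding U_def by blast
    then have "orthogonal v (x - x0)" using v(2) span_base by blast
    then show ?thesis unfolding orthogonal_def by (simp add: inner_diff_right)
  qed
  then show ?thesis using v(1) by blast
qed


lemma pieces:
  fixes F :: "real^'n::finite \<Rightarrow> real^'n"
  assumes sl: "semilinear_map F" and mono: "monotone_map F" and hom: "homogeneous_map F"
  shows "\<exists>G :: ((real^'n) \<times> (real^'n^'n)) set. finite G \<and> (\<forall>g\<in>G. \<forall>i. stoch (snd g $ i)) \<and>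
     (\<forall>x. \<exists>g\<in>G. \<forall>i. F x $ i = fst g $ i + (\<Sum>j\<in>UNIV. snd g $ i $ j * x $ j))"
proof -
  obtain P :: "('n lin_constr set \<times> 'n lin_constr set) set" where finP: "finite P"
    and Pc: "\<forall>(S, Q)\<in>P. finite S \<and> finite Q \<and> (\<forall>C\<in>S \<union> Q. rational_constr C)"
    and geq: "{(x, F x) | x. True} = (\<Union>(S, Q)\<in>P. basic_semilinear_set S Q)"
    using sl unfolding semilinear_map_def by blast
  have gr: "y = F x" if "(S,Q) \<in> P" "(x,y) \<in> basic_semilinear_set S Q" for S Q x y
  proof -
    have "(x,y) \<in> {(x, F x) | x. True}" using geq that by blast
    then show ?thesis by auto
  qed
  have cov0: "\<exists>(S,Q)\<in>P. (x, F x) \<in> basic_semilinear_set S Q" for x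
  proof -
    have "(x, F x) \<in> {(x, F x) | x. True}" by auto
    then show ?thesis unfolding geq by auto
  qed
  have finSQ: "finite S" "finite Q" "\<forall>C\<in>Q. rational_constr C" if "(S,Q) \<in> P" for S Q
    using Pc that by auto
  define pprop :: "'n lin_constr set \<Rightarrow> 'n lin_constr set \<Rightarrow> (real^'n) \<times> (real^'n^'n) \<Rightarrow> bool" where
    "pprop S Q p \<longleftrightarrow> (\<forall>i. stoch (snd p $ i)) \<and>
       (\<forall>x y. (x,y) \<in> basic_semilinear_set S Q \<longrightarrow> (\<forall>i. F x $ i = fst p $ i + (\<Sum>j\<in>UNIV. snd p $ i $ j * x $ j)))"
    for S Q p
  define full :: "'n lin_constr set \<Rightarrow> 'n lin_constr set \<Rightarrow> bool" where "full S Q \<longleftrightarrow> basic_semilinear_set S Q \<noteq> {} \<and> (\<forall>u. \<exists>w. (u,w) \<in> VQ Q)" for S Q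
  define pc where "pc S Q = (SOME p. pprop S Q p)" for S Q
  have pcP: "pprop S Q (pc S Q)" if SQ0: "(S,Q) \<in> P" "full S Q" for S Q
  proof -
    obtain x0 y0 where z0: "(x0,y0) \<in> basic_semilinear_set S Q" using SQ0(2) unfolding full_def by auto
    have "\<exists>c W. (\<forall>i. stoch ((W::real^'n^'n) $ i)) \<and>
     (\<forall>x y. (x,y) \<in> basic_semilinear_set S Q \<longrightarrow> (\<forall>i. F x $ i = c $ i + (\<Sum>j\<in>UNIV. W $ i $ j * x $ j)))"
      using full_piece[where F=F and S=S and Q=Q, OF finSQ(1)[OF SQ0(1)] gr[OF SQ0(1)] z0 _ finSQ(3)[OF SQ0(1)] mono hom]
        SQ0(2) unfolding full_def by blast
    then have "\<exists>p. pprop S Q p" unfolding pprop_def by auto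
    then show ?thesis unfolding pc_def by (rule someI_ex)
  qed
  define FP where "FP = {sq \<in> P. full (fst sq) (snd sq)}"
  define G where "G = (\<lambda>sq. pc (fst sq) (snd sq)) ` FP"
  have finG: "finite G" unfolding G_def FP_def using finP by auto
  have stG: "\<forall>g\<in>G. \<forall>i. stoch (snd g $ i)" unfolding G_def FP_def using pcP unfolding pprop_def by auto
  define NF where "NF = {sq \<in> P. basic_semilinear_set (fst sq) (snd sq) \<noteq> {} \<and> \<not> (\<forall>u. \<exists>w. (u,w) \<in> VQ (snd sq))}"
  define hyp where "hyp sq = (SOME H. \<exists>v c. v \<noteq> (0::real^'n) \<and> H = {x. v \<bullet> x = c} \<and>
      (\<forall>x y. (x,y) \<in> basic_semilinear_set (fst sq) (snd sq) \<longrightarrow> x \<in> H))" for sq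
  have hypP: "\<exists>v c. v \<noteq> (0::real^'n) \<and> hyp sq = {x. v \<bullet> x = c} \<and>
      (\<forall>x y. (x,y) \<in> basic_semilinear_set (fst sq) (snd sq) \<longrightarrow> x \<in> hyp sq)" if sqNF: "sq \<in> NF" for sq
  proof -
    obtain S Q where sq: "sq = (S,Q)" by fastforce
    have SQ: "(S,Q) \<in> P" "basic_semilinear_set S Q \<noteq> {}" "\<not> (\<forall>u. \<exists>w. (u,w) \<in> VQ Q)"
      using sqNF unfolding NF_def sq by auto
    obtain x0 y0 where z0: "(x0,y0) \<in> basic_semilinear_set S Q" using SQ(2) by auto
    obtain v where v: "v \<noteq> 0" "\<forall>x y. (x,y) \<in> basic_semilinear_set S Q \<longrightarrow> v \<bullet> x = v \<bullet> x0"
      using nonfull_hyper[where F=F and S=S and Q=Q, OF finSQ(1)[OF SQ(1)] gr[OF SQ(1)] z0 SQ(3)] by blast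
    have "\<exists>H. \<exists>v c. v \<noteq> (0::real^'n) \<and> H = {x. v \<bullet> x = c} \<and>
      (\<forall>x y. (x,y) \<in> basic_semilinear_set (fst sq) (snd sq) \<longrightarrow> x \<in> H)"
      using v unfolding sq by (intro exI[of _ "{x. v \<bullet> x = v \<bullet> x0}"]) auto
    then show ?thesis unfolding hyp_def by (rule someI_ex)
  qed
  define N where "N = \<Union> (hyp ` NF)"
  have negN: "negligible N" unfolding N_def
  proof (rule negligible_Union)
    show "finite (hyp ` NF)" unfolding NF_def using finP by auto
    fix T assume "T \<in> hyp ` NF"
    then obtain sq where "sq \<in> NF" "T = hyp sq" by auto
    then obtain v c where "v \<noteq> (0::real^'n)" "T = {x. v \<bullet> x = c}" using hypP by blast
    then show "negligible T" using negligible_hyperplane by blast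
  qed
  define C where "C = (\<Union>g\<in>G. {x. \<forall>i. F x $ i = fst g $ i + (\<Sum>j\<in>UNIV. snd g $ i $ j * x $ j)})"
  have clC: "closed C" unfolding C_def
  proof (intro closed_UN finG ballI closed_Collect_all)
    fix g i
    show "closed {x. F x $ i = fst g $ i + (\<Sum>j\<in>UNIV. snd g $ i $ j * x $ j)}"
      by (intro closed_Collect_eq F_cont[OF mono hom] continuous_intros)
  qed
  have "x \<in> C" for x
  proof (rule ccontr)
    assume "x \<notin> C"
    then obtain e where e: "e > 0" "\<And>y. dist y x < e \<Longrightarrow> y \<notin> C"
      using clC unfolding closed_def open_dist by (metis ComplI ComplD)
    have "\<not> negligible (ball x e)" using e(1) by (intro open_not_negligible) auto
    then have "\<not> ball x e \<subseteq> N" using negN negligible_subset by blast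
    then obtain y where y: "y \<in> ball x e" "y \<notin> N" by blast
    obtain S Q where SQ: "(S,Q) \<in> P" "(y, F y) \<in> basic_semilinear_set S Q" using cov0[of y] by auto
    have "full S Q"
    proof (rule ccontr)
      assume "\<not> full S Q"
      then have "(S,Q) \<in> NF" using SQ unfolding NF_def full_def by auto
      then have "y \<in> hyp (S,Q)" using hypP[of "(S,Q)"] SQ by auto
      then have "y \<in> N" using \<open>(S,Q) \<in> NF\<close> unfolding N_def by blast
      with y show False by simp
    qed
    then have "pc S Q \<in> G" using SQ unfolding G_def FP_def by force
    moreover have "\<forall>i. F y $ i = fst (pc S Q) $ i + (\<Sum>j\<in>UNIV. snd (pc S Q) $ i $ j * y $ j)"
      using pcP[OF SQ(1) \<open>full S Q\<close>] SQ(2) unfolding pprop_def by blast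
    ultimately have "y \<in> C" unfolding C_def by blast
    moreover have "dist y x < e" using y by (simp add: dist_commute)
    ultimately show False using e by blast
  qed
  then have "\<forall>x. \<exists>g\<in>G. \<forall>i. F x $ i = fst g $ i + (\<Sum>j\<in>UNIV. snd g $ i $ j * x $ j)"
    unfolding C_def by blast
  then show ?thesis using finG stG by blast
qed

theorem mainTheorem12:
  fixes F :: "real^'n \<Rightarrow> real^'n"
  assumes "semilinear_map F" and "monotone_map F" and "homogeneous_map F"
  shows "\<exists>m R E r q. game_graph m R E r q \<and> (\<forall>x. F x = encoded_operator m E r q x)"
proof -
  note sl = assms(1) and mono = assms(2) and hom = assms(3)
  obtain G :: "((real^'n) \<times> (real^'n^'n)) set" where finG: "finite G"
    and stG: "\<forall>g\<in>G. \<forall>i. stoch (snd g $ i)"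
    and covG: "\<forall>x. \<exists>g\<in>G. \<forall>i. F x $ i = fst g $ i + (\<Sum>j\<in>UNIV. snd g $ i $ j * x $ j)"
    using pieces[OF sl mono hom] by blast
  define Gi where "Gi i = (\<lambda>g. (fst g $ i, snd g $ i)) ` G" for i
  have finGi: "finite (Gi i)" for i unfolding Gi_def using finG by simp
  have covi: "\<exists>h\<in>Gi i. F z $ i = aff h z" for i z
  proof -
    obtain g where "g \<in> G" "\<forall>i. F z $ i = fst g $ i + (\<Sum>j\<in>UNIV. snd g $ i $ j * z $ j)" using covG by blast
    then show ?thesis unfolding Gi_def aff_def by (intro bexI[of _ "(fst g $ i, snd g $ i)"]) auto
  qed
  have conti: "continuous_on UNIV (\<lambda>x. F x $ i)" for i by (rule F_cont[OF mono hom])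
  define Ts where "Ts i = (\<lambda>y. {h\<in>Gi i. aff h y \<le> F y $ i}) ` UNIV" for i
  have T1: "T \<subseteq> Gi i \<and> T \<noteq> {} \<and> finite T" if "T \<in> Ts i" for i T
    using that unfolding Ts_def by (rule minmax_T[of "Gi i" "\<lambda>x. F x $ i" T, OF finGi covi])
  have stT: "stoch (snd g)" if "T \<in> Ts i" "g \<in> T" for i T g
  proof -
    have "g \<in> Gi i" using T1[OF that(1)] that(2) by blast
    then show ?thesis using stG unfolding Gi_def by auto
  qed
  have A1: "finite (Ts i)" for i unfolding Ts_def by (rule minmax_fin[OF finGi])
  have A2: "Ts i \<noteq> {}" for i unfolding Ts_def by simp
  have A3: "finite T" if "T \<in> Ts i" for i T using T1[OF that] by blast
  have A4: "T \<noteq> {}" if "T \<in> Ts i" for i T using T1[OF that] by blast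
  have "\<exists>m R E r q. game_graph m R E r q \<and>
          (\<forall>x. encoded_operator m E r q x = (\<chi> i. Min ((\<lambda>T. Max ((\<lambda>g. aff g x) ` T)) ` Ts i)))"
  proof (rule graph_constr[of Ts])
    show "\<And>i. finite (Ts i)" by (rule A1)
    show "\<And>i. Ts i \<noteq> {}" by (rule A2)
    show "\<And>i T. T \<in> Ts i \<Longrightarrow> finite T" by (rule A3)
    show "\<And>i T. T \<in> Ts i \<Longrightarrow> T \<noteq> {}" by (rule A4)
    show "\<And>i T g. T \<in> Ts i \<Longrightarrow> g \<in> T \<Longrightarrow> stoch (snd g)" by (rule stT)
  qed
  then obtain m R E r q where gg: "game_graph m R E r q"
    and enc: "\<forall>x. encoded_operator m E r q x = (\<chi> i. Min ((\<lambda>T. Max ((\<lambda>g. aff g x) ` T)) ` Ts i))"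
    by blast
  have "F x = encoded_operator m E r q x" for x
  proof -
    have "F x $ i = Min ((\<lambda>T. Max ((\<lambda>g. aff g x) ` T)) ` Ts i)" for i
      unfolding Ts_def by (rule minmax[OF finGi conti covi])
    then show ?thesis using enc by (simp add: vec_eq_iff)
  qed
  then show ?thesis using gg by blast
qed


end
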